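(* Let $p>2$ and let $h:[1,\infty)\to[2/p,\infty)$ be a function which is increasing and continuous on $[1,\infty)$, satisfies $h(t)>t-1$ for all $t\ge1$, is differentiable on $(1,\infty)$ with $$h'(t)=\left(\frac2p\right)^{p+1}(h(t))^{2-p}(h(t)-t+1)^{-2},$$ and satisfies $h(1)=h'(1+)=2/p$. Then $h'(t)\le 1$ for all $t>1$.
   Context: $h'(1+)$ denotes the right-hand derivative of $h$ at $1$. *)

theory Defs
  imports "HOL-Analysis.Analysis"
begin

end

theory Submission
  imports Defs
begin

theorem lemma4p1:
  fixes p :: real and h :: "real \<Rightarrow> real"
  assumes p: "p > 2"
    and range: "\<forall>t\<ge>1. h t \<ge> 2 / p"
    and incr: "mono_on {1..} h"
    and cont: "continuous_on {1..} h"
    and gt: "\<forall>t\<ge>1. h t > t - 1"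
    and deriv_eq: "\<forall>t>1. (h has_real_derivative
          ((2 / p) powr (p + 1) * (h t) powr (2 - p) * (h t - t + 1) powr (-2))) (at t)"
    and h1: "h 1 = 2 / p"
    and rderiv1: "(h has_real_derivative (2 / p)) (at_right 1)"
  shows "\<forall>t>1. deriv h t \<le> 1"
proof -
  define a where "a = 2 / p"
  define c where "c = a powr (p + 1)"
  define D where "D t = c * (h t) powr (2 - p) * (h t - t + 1) powr (-2)" for t
  define G where "G t = (h t - t + 1)^2 - c * (h t) powr (2 - p)" for t
  have a0: "0 < a" "a < 1" using p by (auto simp: a_def)
  have c0: "c > 0" using a0 by (simp add: c_def)
  have hpos: "h t > 0" if "t \<ge> 1" for t using range that a0 unfolding a_def by (meson less_le_trans)
  have upos: "h t - t + 1 > 0" if "t \<ge> 1" for t using gt that by force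
  have Dalt: "D t = c * (h t) powr (2 - p) / (h t - t + 1)^2" if "t \<ge> 1" for t
  proof -
    have "(h t - t + 1) powr (-2) = inverse ((h t - t + 1) powr 2)"
      by (rule powr_minus)
    also have "(h t - t + 1) powr 2 = (h t - t + 1)^2"
      using powr_realpow[OF upos[OF that], of 2] by simp
    finally show ?thesis by (simp add: D_def divide_inverse)
  qed
  have dh: "(h has_real_derivative D t) (at t)" if "t > 1" for t
    using deriv_eq that by (simp add: D_def c_def a_def)
  have dG: "(G has_real_derivative
      (2 * (h t - t + 1) * (D t - 1) - c * ((2 - p) * h t powr (1 - p) * D t))) (at t)"
    if "t > 1" for t
  proof -
    have "((\<lambda>t. (h t - t + 1)^2 - c * (h t) powr (2 - p)) has_real_derivative
      (2 * (h t - t + 1) * (D t - 1) - c * ((2 - p) * h t powr (1 - p) * D t))) (at t)"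
    proof -
      have hp: "h t > 0" using hpos[of t] that by simp
      have d1: "((\<lambda>t. h t powr (2 - p)) has_real_derivative (2 - p) * h t powr (2 - p - of_nat 1) * D t) (at t)"
        by (rule DERIV_fun_powr [OF dh[OF that] hp])
      have d2: "((\<lambda>t. h t - t + 1) has_real_derivative D t - 1) (at t)"
        using DERIV_add[OF DERIV_diff[OF dh[OF that] DERIV_ident] DERIV_const[of 1]] by simp
      have "((\<lambda>t. (h t - t + 1)^2 - c * (h t) powr (2 - p)) has_real_derivative
        (of_nat 2 * ((D t - 1) * (h t - t + 1) ^ (2 - Suc 0))) - c * ((2 - p) * h t powr (2 - p - of_nat 1) * D t)) (at t)"
        by (intro DERIV_diff DERIV_cmult DERIV_power d2 d1)
      moreover have "2 - p - of_nat 1 = 1 - p" by simp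
      ultimately show ?thesis by (simp add: algebra_simps)
    qed
    then show ?thesis by (simp add: G_def[abs_def])
  qed
  have contG: "continuous_on {1..} G"
    unfolding G_def[abs_def]
    using hpos by (force intro!: continuous_intros cont)
  have G1: "G 1 > 0"
  proof -
    have "c * a powr (2 - p) = a powr 3"
      by (simp add: c_def powr_add[symmetric])
    moreover have "a powr 3 < a ^ 2"
      using a0 by (simp add: powr_realpow power_strict_decreasing)
    ultimately show ?thesis by (simp add: G_def h1 a_def[symmetric])
  qed
  have Gpos: "G t > 0" if "t \<ge> 1" for t
  proof (rule ccontr)
    assume "\<not> G t > 0"
    hence Gt: "G t \<le> 0" by simp
    define Z where "Z = {1..t} \<inter> G -` {0}"
    have contGt: "continuous_on {1..t} G" using contG by (rule continuous_on_subset) auto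
    have "\<exists>x. 1 \<le> x \<and> x \<le> t \<and> G x = 0"
      by (rule IVT2') (use Gt G1 that contGt in auto)
    hence Zne: "Z \<noteq> {}" by (auto simp: Z_def)
    have Zcl: "closed Z" unfolding Z_def
      by (rule continuous_closed_preimage[OF contGt]) auto
    have Zbd: "bdd_below Z" by (auto simp: Z_def bdd_below_def)
    define t0 where "t0 = Inf Z"
    have t0Z: "t0 \<in> Z" using closed_contains_Inf[OF Zne Zbd Zcl] by (simp add: t0_def)
    hence t01: "1 \<le> t0" "t0 \<le> t" and Gt0: "G t0 = 0" by (auto simp: Z_def)
    have before: "G s > 0" if "1 \<le> s" "s < t0" for s
    proof (rule ccontr)
      assume "\<not> G s > 0"
      have contGs: "continuous_on {1..s} G" using contG by (rule continuous_on_subset) auto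
      have "\<exists>x. 1 \<le> x \<and> x \<le> s \<and> G x = 0"
        by (rule IVT2') (use \<open>\<not> G s > 0\<close> G1 that contGs in auto)
      then obtain x where x: "1 \<le> x" "x \<le> s" "G x = 0" by blast
      hence "x \<in> Z" using that t01 by (auto simp: Z_def)
      hence "t0 \<le> x" unfolding t0_def by (rule cInf_lower[OF _ Zbd])
      thus False using x that by simp
    qed
    have t0gt: "t0 > 1" using t01 Gt0 G1 by (cases "t0 = 1") auto
    let ?u = "h t0 - t0 + 1"
    have u0: "?u > 0" using upos t01 by auto
    have "?u^2 = c * h t0 powr (2 - p)" using Gt0 by (simp add: G_def)
    hence D1: "D t0 = 1" using Dalt[of t0] t01 u0 c0 by simp
    have "c * ((2 - p) * h t0 powr (1 - p) * D t0) < 0"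
      proof -
      have "h t0 powr (1 - p) > 0" using hpos[of t0] t01 by simp
      hence "(2 - p) * h t0 powr (1 - p) < 0" using p by (simp add: mult_neg_pos)
      thus ?thesis using D1 c0 by (simp add: mult_pos_neg)
    qed
    hence "0 < 2 * ?u * (D t0 - 1) - c * ((2 - p) * h t0 powr (1 - p) * D t0)"
      using D1 by simp
    from DERIV_pos_inc_left[OF dG[OF t0gt] this]
    obtain d where d: "d > 0" "\<forall>e>0. e < d \<longrightarrow> G (t0 - e) < G t0" by blast
    define e where "e = min (d/2) ((t0 - 1)/2)"
    have "e > 0" "e < d" using d t0gt by (auto simp: e_def)
    hence "G (t0 - e) < 0" using d Gt0 by auto
    moreover have "e \<le> (t0 - 1)/2" unfolding e_def by (rule min.cobounded2)
    hence "G (t0 - e) > 0" using t0gt \<open>e>0\<close> by (intro before) auto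
    ultimately show False by simp
  qed
  show ?thesis
  proof (intro allI impI)
    fix t :: real assume t: "t > 1"
    have "deriv h t = D t" using dh[OF t] by (rule DERIV_imp_deriv)
    also have "\<dots> = c * (h t) powr (2 - p) / (h t - t + 1)^2" using Dalt t by simp
    also have "\<dots> \<le> 1"
      using Gpos[of t] t upos[of t] by (simp add: G_def divide_le_eq)
    finally show "deriv h t \<le> 1" .
  qed
qed

end
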